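(* Consider the control system $\dot x=f(d,x)+g(x)u$, $x\in\mathbb{R}^n$, $u\in U\subseteq\mathbb{R}$, $d\in D$, with $D\subseteq\mathbb{R}^l$ compact, $f,g$ continuous, $f(d,0)=0$ for all $d\in D$, satisfying (H) and one of (P1), (P2), (P3). Suppose that $V_1,\dots,V_k\in C^1(\mathbb{R}^n;\mathbb{R}_+)$ is a VRCLF for this system, with associated data $\eta,W,\delta,K,\gamma_{i,j},\rho,\varepsilon$ (and $A,\kappa,\nu$ in property (vi)). Then there exist functions $\tilde\gamma_{i,j}\in\mathcal{N}_1$, $i,j=1,\dots,k$, with $\tilde\gamma_{i,i}\equiv0$, such that for $i\ne j$ each $\tilde\gamma_{i,j}$ is positive definite and satisfies $\lim_{s\to+\infty}\tilde\gamma_{i,j}(s)=+\infty$, and such that all properties of the definition of the VRCLF (for the same case (P1), (P2) or (P3)) hold with $\tilde\gamma_{i,j}$ in place of $\gamma_{i,j}$ (and the same remaining data).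
   Context: Notation: $\mathbb{R}_+=[0,+\infty)$. A function $\gamma:\mathbb{R}_+\to\mathbb{R}_+$ is of class $\mathcal{N}_1$ if it is continuous, non-decreasing and $\gamma(0)=0$; of class $\mathcal{K}_\infty$ if it is continuous, increasing, $\gamma(0)=0$ and $\gamma(s)\to+\infty$ as $s\to+\infty$. A function $\rho:\mathbb{R}_+\to\mathbb{R}_+$ is positive definite if $\rho(0)=0$ and $\rho(s)>0$ for $s>0$. A continuous $W:\mathbb{R}^n\to\mathbb{R}$ is radially unbounded if for every $M>0$ the set $\{x: W(x)\le M\}$ is compact or empty. For a $C^1$ function $V:\mathbb{R}^n\to\mathbb{R}$, $\nabla V(x)$ denotes its (row) gradient, $L_gV(x):=\nabla V(x)g(x)$ and $\max_{d\in D}L_fV(x):=\max_{d\in D}\nabla V(x)f(d,x)$. Hypothesis (H): there exists a symmetric positive definite matrix $P\in\mathbb{R}^{n\times n}$ such that for every bounded $S\subset\mathbb{R}^n\times\mathbb{R}$ there is $L\ge0$ with $(x-y)'P\big(f(d,x)+g(x)u-f(d,y)-g(y)u\big)\le L|x-y|^2$ for all $(x,u),(y,u)\in S$ and all $d\in D$. Control sets: (P1) $U=\mathbb{R}$; (P2) $U=[-a,+\infty)$ for some constant $a\ge0$; (P3) $U=[-a,b]$ for some constants $a,b\ge0$. Small-gain conditions for functions $\gamma_{i,j}$, $i,j=1,\dots,k$: for each $r=2,\dots,k$ and all pairwise distinct $i_1,\dots,i_r\in\{1,\dots,k\}$, $(\gamma_{i_1,i_2}\circ\gamma_{i_2,i_3}\circ\cdots\circ\gamma_{i_r,i_1})(s)<s$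 for all $s>0$. Definition (VRCLF). Under (H),(P1), a family $V_1,\dots,V_k\in C^1(\mathbb{R}^n;\mathbb{R}_+)$ is a VRCLF if there exist $\eta\in C^1(\mathbb{R}^n;\mathbb{R})$ with $\eta(0)<0$, a radially unbounded $W\in C^1(\mathbb{R}^n;[1,+\infty))$, $\delta\in C^0(\mathbb{R}_+;(0,+\infty))$, a non-decreasing $K\in C^0(\mathbb{R}_+;[1,+\infty))$, functions $\gamma_{i,j}\in\mathcal{N}_1$ ($i,j=1,\dots,k$) with $\gamma_{i,i}\equiv0$, a continuous positive definite $\rho:\mathbb{R}_+\to\mathbb{R}_+$ and a constant $\varepsilon>0$ such that: (i) there exist $a_1,a_2\in\mathcal{K}_\infty$ with $a_1(|x|)\le\max_{i}V_i(x)\le a_2(|x|)$ for all $x\in\mathbb{R}^n$; (ii) for all $x$ with $\eta(x)\le\varepsilon$ and all $i,j$: if $\max_{s}\gamma_{i,s}(V_s(x))\le V_i(x)$ and $L_gV_i(x)=0$, then $\max_{d\in D}L_fV_i(x)+\rho(V_i(x))\le0$; if $\max_s\gamma_{i,s}(V_s(x))\le V_i(x)$, $\max_s\gamma_{j,s}(V_s(x))\le V_j(x)$ and $L_gV_i(x)L_gV_j(x)<0$, then $\max_{d}L_fV_i(x)+\rho(V_i(x))\le\frac{L_gV_i(x)}{L_gV_j(x)}\big(\max_dL_fV_j(x)+\rho(V_j(x))\big)$; (iii) for all $x$ with $\eta(x)\ge0$: if $L_g\eta(x)=0$ then $\max_dL_f\eta(x)+\delta(\eta(x))\le0$; if $L_gW(x)=0$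 then $\max_dL_fW(x)-K(\eta(x))W(x)\le0$; if $L_g\eta(x)L_gW(x)<0$ then $\max_dL_f\eta(x)+\delta(\eta(x))\le\frac{L_g\eta(x)}{L_gW(x)}\big(\max_dL_fW(x)-K(\eta(x))W(x)\big)$; (iv) for all $x$ with $0\le\eta(x)\le\varepsilon$ and all $j$: if $\max_s\gamma_{j,s}(V_s(x))\le V_j(x)$ and $L_g\eta(x)L_gV_j(x)<0$ then $\max_dL_f\eta(x)+\delta(\eta(x))\le\frac{L_g\eta(x)}{L_gV_j(x)}\big(\max_dL_fV_j(x)+\rho(V_j(x))\big)$; if $\max_s\gamma_{j,s}(V_s(x))\le V_j(x)$ and $L_gW(x)L_gV_j(x)<0$ then $\max_dL_fW(x)-K(\eta(x))W(x)\le\frac{L_gW(x)}{L_gV_j(x)}\big(\max_dL_fV_j(x)+\rho(V_j(x))\big)$; (v) the functions $\gamma_{i,j}$ satisfy the small-gain conditions; (vi) there exist an open set $A\subseteq\mathbb{R}^n$ with $0\in A$ and a locally Lipschitz $\kappa\in C^{\nu}(A;U)$, $\nu\in\{0,1,2,\dots\}\cup\{\infty\}$, with $\kappa(0)=0$, such that for all $i$ and all $x\in A$ with $\max_j\gamma_{i,j}(V_j(x))\le V_i(x)$: $\max_dL_fV_i(x)+L_gV_i(x)\kappa(x)\le-\rho(V_i(x))$. Under (H),(P2) a VRCLF must satisfy (i)–(vi) and also (vii): for all $x$ and $i$: if $\max_s\gamma_{i,s}(V_s(x))\le V_i(x)$, $\eta(x)\le\varepsilon$ and $L_gV_i(x)>0$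 then $\max_dL_fV_i(x)+\rho(V_i(x))-aL_gV_i(x)<0$; if $\eta(x)\ge0$ and $L_g\eta(x)>0$ then $\max_dL_f\eta(x)+\delta(\eta(x))-aL_g\eta(x)<0$; if $\eta(x)\ge0$ and $L_gW(x)>0$ then $\max_dL_fW(x)-K(\eta(x))W(x)-aL_gW(x)<0$. Under (H),(P3) a VRCLF must satisfy (i)–(vii) and also (viii): for all $x$ and $i$: if $\max_s\gamma_{i,s}(V_s(x))\le V_i(x)$, $\eta(x)\le\varepsilon$ and $L_gV_i(x)<0$ then $\max_dL_fV_i(x)+\rho(V_i(x))+bL_gV_i(x)<0$; if $\eta(x)\ge0$ and $L_g\eta(x)<0$ then $\max_dL_f\eta(x)+\delta(\eta(x))+bL_g\eta(x)<0$; if $\eta(x)\ge0$ and $L_gW(x)<0$ then $\max_dL_fW(x)-K(\eta(x))W(x)+bL_gW(x)<0$. *)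

theory Defs
  imports "HOL-Analysis.Analysis" "HOL-Library.Extended_Nat"
begin

definition classN1 :: "(real \<Rightarrow> real) \<Rightarrow> bool" where
  "classN1 h \<longleftrightarrow> continuous_on {0..} h \<and> mono_on {0..} h \<and> h 0 = 0 \<and> (\<forall>s\<ge>0. h s \<ge> 0)"

definition classKinf :: "(real \<Rightarrow> real) \<Rightarrow> bool" where
  "classKinf h \<longleftrightarrow> continuous_on {0..} h \<and> strict_mono_on {0..} h \<and> h 0 = 0
     \<and> (\<forall>s\<ge>0. h s \<ge> 0) \<and> filterlim h at_top at_top"

definition posdef :: "(real \<Rightarrow> real) \<Rightarrow> bool" where
  "posdef h \<longleftrightarrow> h 0 = 0 \<and> (\<forall>s>0. h s > 0)"

definition radially_unbounded :: "('a::real_normed_vector \<Rightarrow> real) \<Rightarrow> bool" where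
  "radially_unbounded W \<longleftrightarrow> (\<forall>M>0. compact {x. W x \<le> M} \<or> {x. W x \<le> M} = {})"

fun Ck :: "nat \<Rightarrow> (real^'n) set \<Rightarrow> (real^'n \<Rightarrow> real) \<Rightarrow> bool" where
  "Ck 0 A h = continuous_on A h"
| "Ck (Suc m) A h = (continuous_on A h \<and>
     (\<forall>i. \<exists>p. (\<forall>x\<in>A. ((\<lambda>t. h (x + t *\<^sub>R axis i 1)) has_real_derivative p x) (at 0)) \<and> Ck m A p))"

definition Cnu :: "enat \<Rightarrow> (real^'n) set \<Rightarrow> (real^'n \<Rightarrow> real) \<Rightarrow> bool" where
  "Cnu nu A h = (case nu of enat m \<Rightarrow> Ck m A h | \<infinity> \<Rightarrow> (\<forall>m. Ck m A h))"

definition locally_lipschitz_on :: "(real^'n) set \<Rightarrow> (real^'n \<Rightarrow> real) \<Rightarrow> bool" where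
  "locally_lipschitz_on A h \<longleftrightarrow> (\<forall>x\<in>A. \<exists>e>0. \<exists>L. L-lipschitz_on (cball x e \<inter> A) h)"

definition lie :: "(real^'n \<Rightarrow> real) \<Rightarrow> real^'n \<Rightarrow> real^'n \<Rightarrow> real" where
  "lie V x v = frechet_derivative V (at x) v"

definition Lg :: "(real^'n \<Rightarrow> real^'n) \<Rightarrow> (real^'n \<Rightarrow> real) \<Rightarrow> real^'n \<Rightarrow> real" where
  "Lg g V x = lie V x (g x)"

definition maxLf :: "(real^'l) set \<Rightarrow> (real^'l \<Rightarrow> real^'n \<Rightarrow> real^'n) \<Rightarrow> (real^'n \<Rightarrow> real) \<Rightarrow> real^'n \<Rightarrow> real" where
  "maxLf D f V x = Sup ((\<lambda>d. lie V x (f d x)) ` D)"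

datatype ctrl = P1 | P2 real | P3 real real

definition ctrl_ok :: "ctrl \<Rightarrow> bool" where
  "ctrl_ok cs = (case cs of P1 \<Rightarrow> True | P2 a \<Rightarrow> a \<ge> 0 | P3 a b \<Rightarrow> a \<ge> 0 \<and> b \<ge> 0)"

definition ctrlset :: "ctrl \<Rightarrow> real set" where
  "ctrlset cs = (case cs of P1 \<Rightarrow> UNIV | P2 a \<Rightarrow> {-a..} | P3 a b \<Rightarrow> {-a..b})"

definition hypH :: "(real^'l) set \<Rightarrow> (real^'l \<Rightarrow> real^'n \<Rightarrow> real^'n) \<Rightarrow> (real^'n \<Rightarrow> real^'n) \<Rightarrow> bool" where
  "hypH D f g \<longleftrightarrow> (\<exists>P::real^'n^'n. transpose P = P \<and> (\<forall>v. v \<noteq> 0 \<longrightarrow> v \<bullet> (P *v v) > 0) \<and>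
     (\<forall>S::((real^'n) \<times> real) set. bounded S \<longrightarrow> (\<exists>L\<ge>0. \<forall>x y u d.
        (x, u) \<in> S \<longrightarrow> (y, u) \<in> S \<longrightarrow> d \<in> D \<longrightarrow>
        (x - y) \<bullet> (P *v (f d x + u *\<^sub>R g x - f d y - u *\<^sub>R g y)) \<le> L * (norm (x - y))\<^sup>2)))"

definition system_ok :: "(real^'l) set \<Rightarrow> (real^'l \<Rightarrow> real^'n \<Rightarrow> real^'n) \<Rightarrow> (real^'n \<Rightarrow> real^'n) \<Rightarrow> ctrl \<Rightarrow> bool" where
  "system_ok D f g cs \<longleftrightarrow> compact D \<and> continuous_on (D \<times> UNIV) (\<lambda>(d, x). f d x)
     \<and> continuous_on UNIV g \<and> (\<forall>d\<in>D. f d 0 = 0) \<and> hypH D f g \<and> ctrl_ok cs"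

fun chain :: "(nat \<Rightarrow> nat \<Rightarrow> real \<Rightarrow> real) \<Rightarrow> nat \<Rightarrow> nat list \<Rightarrow> real \<Rightarrow> real" where
  "chain gam i0 [] = id"
| "chain gam i0 [a] = gam a i0"
| "chain gam i0 (a # b # rest) = gam a b \<circ> chain gam i0 (b # rest)"

definition small_gain :: "nat \<Rightarrow> (nat \<Rightarrow> nat \<Rightarrow> real \<Rightarrow> real) \<Rightarrow> bool" where
  "small_gain k gam \<longleftrightarrow> (\<forall>is. 2 \<le> length is \<and> length is \<le> k \<and> distinct is \<and> set is \<subseteq> {1..k}
      \<longrightarrow> (\<forall>s>0. chain gam (hd is) is s < s))"

definition gate :: "nat \<Rightarrow> (nat \<Rightarrow> nat \<Rightarrow> real \<Rightarrow> real) \<Rightarrow> (nat \<Rightarrow> real^'n \<Rightarrow> real) \<Rightarrow> nat \<Rightarrow> real^'n \<Rightarrow> bool" where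
  "gate k gam V i x \<longleftrightarrow> Max ((\<lambda>s. gam i s (V s x)) ` {1..k}) \<le> V i x"

definition VRCLF_data ::
  "(real^'l) set \<Rightarrow> (real^'l \<Rightarrow> real^'n \<Rightarrow> real^'n) \<Rightarrow> (real^'n \<Rightarrow> real^'n) \<Rightarrow> ctrl \<Rightarrow>
   nat \<Rightarrow> (nat \<Rightarrow> real^'n \<Rightarrow> real) \<Rightarrow>
   (real^'n \<Rightarrow> real) \<Rightarrow> (real^'n \<Rightarrow> real) \<Rightarrow> (real \<Rightarrow> real) \<Rightarrow> (real \<Rightarrow> real) \<Rightarrow>
   (nat \<Rightarrow> nat \<Rightarrow> real \<Rightarrow> real) \<Rightarrow> (real \<Rightarrow> real) \<Rightarrow> real \<Rightarrow>
   (real^'n) set \<Rightarrow> (real^'n \<Rightarrow> real) \<Rightarrow> enat \<Rightarrow> bool" where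
  "VRCLF_data D f g cs k V \<eta> W \<delta> K gam \<rho> \<epsilon> A \<kappa> \<nu> \<longleftrightarrow>
    \<comment> \<open>regularity of the data\<close>
    (\<forall>i\<in>{1..k}. Ck 1 UNIV (V i) \<and> (\<forall>x. V i x \<ge> 0))
    \<and> Ck 1 UNIV \<eta> \<and> \<eta> 0 < 0
    \<and> Ck 1 UNIV W \<and> (\<forall>x. W x \<ge> 1) \<and> radially_unbounded W
    \<and> continuous_on {0..} \<delta> \<and> (\<forall>s\<ge>0. \<delta> s > 0)
    \<and> continuous_on {0..} K \<and> mono_on {0..} K \<and> (\<forall>s\<ge>0. K s \<ge> 1)
    \<and> (\<forall>i\<in>{1..k}. \<forall>j\<in>{1..k}. classN1 (gam i j))
    \<and> (\<forall>i\<in>{1..k}. \<forall>s\<ge>0. gam i i s = 0)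
    \<and> continuous_on {0..} \<rho> \<and> posdef \<rho> \<and> (\<forall>s\<ge>0. \<rho> s \<ge> 0)
    \<and> \<epsilon> > 0
    \<comment> \<open>(i)\<close>
    \<and> (\<exists>a1 a2. classKinf a1 \<and> classKinf a2 \<and>
         (\<forall>x. a1 (norm x) \<le> Max ((\<lambda>i. V i x) ` {1..k}) \<and> Max ((\<lambda>i. V i x) ` {1..k}) \<le> a2 (norm x)))
    \<comment> \<open>(ii)\<close>
    \<and> (\<forall>x. \<eta> x \<le> \<epsilon> \<longrightarrow> (\<forall>i\<in>{1..k}. \<forall>j\<in>{1..k}.
         (gate k gam V i x \<and> Lg g (V i) x = 0 \<longrightarrow> maxLf D f (V i) x + \<rho> (V i x) \<le> 0) \<and>
         (gate k gam V i x \<and> gate k gam V j x \<and> Lg g (V i) x * Lg g (V j) x < 0 \<longrightarrow>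
            maxLf D f (V i) x + \<rho> (V i x) \<le>
              Lg g (V i) x / Lg g (V j) x * (maxLf D f (V j) x + \<rho> (V j x)))))
    \<comment> \<open>(iii)\<close>
    \<and> (\<forall>x. \<eta> x \<ge> 0 \<longrightarrow>
         (Lg g \<eta> x = 0 \<longrightarrow> maxLf D f \<eta> x + \<delta> (\<eta> x) \<le> 0) \<and>
         (Lg g W x = 0 \<longrightarrow> maxLf D f W x - K (\<eta> x) * W x \<le> 0) \<and>
         (Lg g \<eta> x * Lg g W x < 0 \<longrightarrow> maxLf D f \<eta> x + \<delta> (\<eta> x) \<le>
            Lg g \<eta> x / Lg g W x * (maxLf D f W x - K (\<eta> x) * W x)))
    \<comment> \<open>(iv)\<close>
    \<and> (\<forall>x. 0 \<le> \<eta> x \<and> \<eta> x \<le> \<epsilon> \<longrightarrow> (\<forall>j\<in>{1..k}.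
         (gate k gam V j x \<and> Lg g \<eta> x * Lg g (V j) x < 0 \<longrightarrow>
            maxLf D f \<eta> x + \<delta> (\<eta> x) \<le> Lg g \<eta> x / Lg g (V j) x * (maxLf D f (V j) x + \<rho> (V j x))) \<and>
         (gate k gam V j x \<and> Lg g W x * Lg g (V j) x < 0 \<longrightarrow>
            maxLf D f W x - K (\<eta> x) * W x \<le> Lg g W x / Lg g (V j) x * (maxLf D f (V j) x + \<rho> (V j x)))))
    \<comment> \<open>(v)\<close>
    \<and> small_gain k gam
    \<comment> \<open>(vi)\<close>
    \<and> open A \<and> 0 \<in> A \<and> locally_lipschitz_on A \<kappa> \<and> Cnu \<nu> A \<kappa> \<and> \<kappa> ` A \<subseteq> ctrlset cs \<and> \<kappa> 0 = 0
    \<and> (\<forall>i\<in>{1..k}. \<forall>x\<in>A. gate k gam V i x \<longrightarrow>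
         maxLf D f (V i) x + Lg g (V i) x * \<kappa> x \<le> - \<rho> (V i x))
    \<comment> \<open>(vii) under (P2) and (P3)\<close>
    \<and> (\<forall>a. (cs = P2 a \<or> (\<exists>b. cs = P3 a b)) \<longrightarrow>
         (\<forall>x. \<forall>i\<in>{1..k}. gate k gam V i x \<and> \<eta> x \<le> \<epsilon> \<and> Lg g (V i) x > 0 \<longrightarrow>
            maxLf D f (V i) x + \<rho> (V i x) - a * Lg g (V i) x < 0) \<and>
         (\<forall>x. \<eta> x \<ge> 0 \<and> Lg g \<eta> x > 0 \<longrightarrow> maxLf D f \<eta> x + \<delta> (\<eta> x) - a * Lg g \<eta> x < 0) \<and>
         (\<forall>x. \<eta> x \<ge> 0 \<and> Lg g W x > 0 \<longrightarrow> maxLf D f W x - K (\<eta> x) * W x - a * Lg g W x < 0))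
    \<comment> \<open>(viii) under (P3)\<close>
    \<and> (\<forall>b. (\<exists>a. cs = P3 a b) \<longrightarrow>
         (\<forall>x. \<forall>i\<in>{1..k}. gate k gam V i x \<and> \<eta> x \<le> \<epsilon> \<and> Lg g (V i) x < 0 \<longrightarrow>
            maxLf D f (V i) x + \<rho> (V i x) + b * Lg g (V i) x < 0) \<and>
         (\<forall>x. \<eta> x \<ge> 0 \<and> Lg g \<eta> x < 0 \<longrightarrow> maxLf D f \<eta> x + \<delta> (\<eta> x) + b * Lg g \<eta> x < 0) \<and>
         (\<forall>x. \<eta> x \<ge> 0 \<and> Lg g W x < 0 \<longrightarrow> maxLf D f W x - K (\<eta> x) * W x + b * Lg g W x < 0))"

end

theory Submission
  imports Defs
begin


definition bfun :: "(real\<Rightarrow>real) \<Rightarrow> real \<Rightarrow> real" where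
  "bfun R y = Inf ((\<lambda>t. t/2 + max 0 (y - R t)) ` {0..})"

lemma bfun_props:
  assumes N: "classN1 R"
  shows "\<forall>t\<ge>0. bfun R (R t) \<le> t/2"
    and "\<forall>y\<ge>0. bfun R y \<le> y"
    and "\<forall>y. bfun R y \<ge> 0"
    and "classN1 (bfun R)"
    and "\<forall>y>0. bfun R y > 0"
    and "filterlim (bfun R) at_top at_top"
proof -
  have cR: "continuous_on {0..} R" and mR: "mono_on {0..} R" and R0: "R 0 = 0"
    using N by (auto simp: classN1_def)
  have bdd: "bdd_below ((\<lambda>t. t/2 + max 0 (y - R t)) ` {0..})" for y
    by (rule bdd_belowI2[where m=0]) auto
  have low: "bfun R y \<le> t/2 + max 0 (y - R t)" if "t \<ge> 0" for y t
    unfolding bfun_def using cINF_lower[OF bdd, of t y] that by auto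
  have gr: "m \<le> bfun R y" if "\<And>t. t \<ge> 0 \<Longrightarrow> m \<le> t/2 + max 0 (y - R t)" for m y
    unfolding bfun_def by (rule cINF_greatest) (use that in auto)
  show A: "\<forall>t\<ge>0. bfun R (R t) \<le> t/2" using low by (metis add.right_neutral diff_self max.idem)
  show E: "\<forall>y\<ge>0. bfun R y \<le> y" using low[of 0] R0 by (metis add_0 div_0 diff_zero max.absorb2 order_refl)
  show P: "\<forall>y. bfun R y \<ge> 0" by (auto intro!: gr)
  have mono: "bfun R y1 \<le> bfun R y2" if "y1 \<le> y2" for y1 y2
  proof (rule gr)
    fix t :: real assume "t \<ge> 0"
    then have "bfun R y1 \<le> t/2 + max 0 (y1 - R t)" by (rule low)
    also have "\<dots> \<le> t/2 + max 0 (y2 - R t)" using that by auto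
    finally show "bfun R y1 \<le> t/2 + max 0 (y2 - R t)" .
  qed
  have lip: "bfun R y2 - \<bar>y2 - y1\<bar> \<le> bfun R y1" for y1 y2
  proof (rule gr)
    fix t :: real assume "t \<ge> 0"
    then have "bfun R y2 \<le> t/2 + max 0 (y2 - R t)" by (rule low)
    also have "\<dots> \<le> t/2 + max 0 (y1 - R t) + \<bar>y2 - y1\<bar>" by auto
    finally show "bfun R y2 - \<bar>y2 - y1\<bar> \<le> t/2 + max 0 (y1 - R t)" by simp
  qed
  have "1-lipschitz_on {0..} (bfun R)"
  proof (rule lipschitz_onI)
    fix x y :: real
    show "dist (bfun R x) (bfun R y) \<le> 1 * dist x y"
      using lip[of x y] lip[of y x] by (auto simp: dist_real_def abs_minus_commute)
  qed simp
  then have cont: "continuous_on {0..} (bfun R)" by (rule lipschitz_on_continuous_on)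
  have b0: "bfun R 0 = 0" using E P by (meson order.refl order_antisym)
  show "classN1 (bfun R)" unfolding classN1_def
    using cont b0 P by (auto simp: mono_on_def intro: mono)
  show "\<forall>y>0. bfun R y > 0"
  proof (intro allI impI)
    fix y :: real assume y: "y > 0"
    from cR[unfolded continuous_on_iff] y obtain d where d: "d > 0"
      and dd: "\<And>t. t \<in> {0..} \<Longrightarrow> dist t 0 < d \<Longrightarrow> dist (R t) (R 0) < y/2"
      by (metis atLeast_iff half_gt_zero order.refl)
    have "min (y/2) (d/2) \<le> bfun R y"
    proof (rule gr)
      fix t :: real assume t: "t \<ge> 0"
      show "min (y/2) (d/2) \<le> t/2 + max 0 (y - R t)"
      proof (cases "t < d")
        case True
        then have "R t < y/2" using dd[of t] t R0 by (auto simp: dist_real_def)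
        then show ?thesis using t by auto
      next
        case False then show ?thesis by auto
      qed
    qed
    then show "bfun R y > 0" using y d by (meson half_gt_zero less_le_trans min_less_iff_conj)
  qed
  show "filterlim (bfun R) at_top at_top"
    unfolding filterlim_at_top eventually_at_top_linorder
  proof
    fix Z :: real
    show "\<exists>N. \<forall>y\<ge>N. Z \<le> bfun R y"
    proof (intro exI allI impI)
      fix y assume y: "y \<ge> R (2*\<bar>Z\<bar>) + \<bar>Z\<bar>"
      have "\<bar>Z\<bar> \<le> bfun R y"
      proof (rule gr)
        fix t :: real assume t: "t \<ge> 0"
        show "\<bar>Z\<bar> \<le> t/2 + max 0 (y - R t)"
        proof (cases "t \<le> 2*\<bar>Z\<bar>")
          case True
          then have "R t \<le> R (2*\<bar>Z\<bar>)" using mR t by (auto simp: mono_on_def)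
          then show ?thesis using y t by auto
        next
          case False then show ?thesis by auto
        qed
      qed
      then show "Z \<le> bfun R y" by auto
    qed
  qed
qed


lemma N1_funpow: "classN1 G \<Longrightarrow> classN1 (G ^^ n)"
proof (induction n)
  case 0 then show ?case by (auto simp: classN1_def mono_on_def continuous_on_id)
next
  case (Suc n)
  have c: "continuous_on {0..} G" "continuous_on {0..} (G^^n)" and m: "mono_on {0..} G" "mono_on {0..} (G^^n)"
    and nn: "\<forall>s\<ge>0. (G^^n) s \<ge> 0" "\<forall>s\<ge>0. G s \<ge> 0" and z: "G 0 = 0" "(G^^n) 0 = 0"
    using Suc by (auto simp: classN1_def)
  have "continuous_on {0..} (G \<circ> (G^^n))"
    by (rule continuous_on_compose) (use c nn in \<open>auto intro: continuous_on_subset\<close>)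
  moreover have "mono_on {0..} (\<lambda>x. G ((G^^n) x))" using m nn by (auto simp: mono_on_def)
  moreover have eq: "G ^^ Suc n = (\<lambda>x. G ((G^^n) x))" by auto
  ultimately show ?case unfolding eq classN1_def using nn z by (auto simp: comp_def)
qed

lemma fp_props:
  assumes "classN1 G" "\<forall>s\<ge>0. G s \<ge> s"
  shows "s \<ge> 0 \<Longrightarrow> (G^^n) s \<ge> s"
    and "0 \<le> x \<Longrightarrow> x \<le> y \<Longrightarrow> (G^^n) x \<le> (G^^n) y"
    and "s \<ge> 0 \<Longrightarrow> m \<le> n \<Longrightarrow> (G^^m) s \<le> (G^^n) s"
proof -
  have N: "classN1 (G^^n)" for n using N1_funpow[OF assms(1)] .
  show ge: "s \<ge> 0 \<Longrightarrow> (G^^n) s \<ge> s" for n s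
    by (induction n) (use assms(2) in \<open>auto intro: order_trans\<close>)
  show "0 \<le> x \<Longrightarrow> x \<le> y \<Longrightarrow> (G^^n) x \<le> (G^^n) y"
    using N[of n] by (auto simp: classN1_def mono_on_def)
  show "s \<ge> 0 \<Longrightarrow> m \<le> n \<Longrightarrow> (G^^m) s \<le> (G^^n) s"
  proof -
    assume s: "s \<ge> 0" and mn: "m \<le> n"
    then obtain d where n: "n = d + m" by (metis add.commute le_Suc_ex)
    have "(G^^n) s = (G^^d) ((G^^m) s)" by (simp add: n funpow_add)
    moreover have "(G^^m) s \<ge> 0" using N[of m] s by (auto simp: classN1_def)
    ultimately show ?thesis using ge by auto
  qed
qed

lemma chain_cons: "l \<noteq> [] \<Longrightarrow> chain gam iz (a # l) = gam a (hd l) \<circ> chain gam iz l"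
  by (cases l) auto

lemma chain_bound:
  fixes gt gam :: "nat\<Rightarrow>nat\<Rightarrow>real\<Rightarrow>real" and G \<beta> :: "real \<Rightarrow> real"
  assumes H0: "\<forall>a\<in>S. \<forall>b\<in>S. \<forall>w\<ge>0. (gt a b w = gam a b w \<or> gt a b w = \<beta> w) \<and> 0 \<le> gt a b w
       \<and> gt a b w \<le> G w \<and> 0 \<le> gam a b w \<and> gam a b w \<le> G w"
    and G: "classN1 G" "\<forall>s\<ge>0. G s \<ge> s"
    and bm: "mono_on {0..} \<beta>" and bn: "\<forall>y\<ge>0. \<beta> y \<ge> 0"
  shows "l \<noteq> [] \<Longrightarrow> set l \<subseteq> S \<Longrightarrow> iz \<in> S \<Longrightarrow> s \<ge> 0 \<Longrightarrow>
     0 \<le> chain gt iz l s \<and> 0 \<le> chain gam iz l s \<and> chain gam iz l s \<le> (G^^length l) s \<and>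
     (chain gt iz l s = chain gam iz l s \<or> chain gt iz l s \<le> (G^^length l) (\<beta> ((G^^length l) s)))"
proof (induction l)
  case Nil then show ?case by simp
next
  case (Cons a l)
  have H: "\<And>a b w. a\<in>S \<Longrightarrow> b\<in>S \<Longrightarrow> w \<ge> 0 \<Longrightarrow> (gt a b w = gam a b w \<or> gt a b w = \<beta> w) \<and> 0 \<le> gt a b w
       \<and> gt a b w \<le> G w \<and> 0 \<le> gam a b w \<and> gam a b w \<le> G w" using H0 by blast
  have Gm: "0 \<le> x \<Longrightarrow> x \<le> y \<Longrightarrow> G x \<le> G y" for x y using G(1) by (auto simp: classN1_def mono_on_def)
  note fp = fp_props[OF G]
  show ?case
  proof (cases "l = []")
    case True
    have a: "a \<in> S" using Cons by auto
    have "\<beta> s \<le> G (\<beta> (G s))"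
    proof -
      have "\<beta> s \<le> \<beta> (G s)" using bm G Cons.prems by (auto simp: mono_on_def)
      also have "\<dots> \<le> G (\<beta> (G s))" using G bn Cons.prems
        by (meson classN1_def order_trans)
      finally show ?thesis .
    qed
    then show ?thesis using H[OF a Cons.prems(3,4)] True by auto
  next
    case False
    then obtain b rest where l: "l = b # rest" by (cases l) auto
    have ab: "a \<in> S" "b \<in> S" using Cons.prems l by auto
    let ?n = "length l"
    define w where "w = chain gt iz l s"
    define v where "v = chain gam iz l s"
    have IH: "0 \<le> w \<and> 0 \<le> v \<and> v \<le> (G^^?n) s \<and> (w = v \<or> w \<le> (G^^?n) (\<beta> ((G^^?n) s)))"
      using Cons.IH[OF False] Cons.prems unfolding w_def v_def by auto
    have e1: "chain gt iz (a # l) s = gt a b w" unfolding w_def using chain_cons[OF False] l by simp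
    have e2: "chain gam iz (a # l) s = gam a b v" unfolding v_def using chain_cons[OF False] l by simp
    have Hw: "(gt a b w = gam a b w \<or> gt a b w = \<beta> w) \<and> 0 \<le> gt a b w \<and> gt a b w \<le> G w"
      using H[OF ab] IH by auto
    have Hv: "0 \<le> gam a b v \<and> gam a b v \<le> G v" using H[OF ab] IH by auto
    have gvn: "gam a b v \<le> (G^^Suc ?n) s"
      using Hv Gm[of v "(G^^?n) s"] IH by auto
    have s0: "s \<ge> 0" using Cons.prems by auto
    have Gn1: "(G^^?n) s \<le> (G^^Suc ?n) s" using fp(3)[OF s0, of ?n "Suc ?n"] by simp
    have Gn0: "(G^^?n) s \<ge> 0" using fp(1)[OF s0, of ?n] s0 by linarith
    have bGn: "\<beta> ((G^^?n) s) \<le> \<beta> ((G^^Suc ?n) s)" using bm Gn1 Gn0 by (auto simp: mono_on_def)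
    have bGn0: "\<beta> ((G^^?n) s) \<ge> 0" using bn Gn0 by auto
    have disj: "gt a b w = gam a b v \<or> gt a b w \<le> (G^^Suc ?n) (\<beta> ((G^^Suc ?n) s))"
    proof (cases "w = v")
      case wv: True
      show ?thesis
      proof (cases "gt a b w = gam a b w")
        case True then show ?thesis using wv by simp
      next
        case False
        then have "gt a b w = \<beta> w" using Hw by auto
        also have "\<dots> \<le> \<beta> ((G^^?n) s)" using bm IH wv Gn0 by (auto simp: mono_on_def)
        also have "\<dots> \<le> \<beta> ((G^^Suc ?n) s)" by (rule bGn)
        also have "\<dots> \<le> (G^^Suc ?n) (\<beta> ((G^^Suc ?n) s))"
          using fp(1)[of "\<beta> ((G^^Suc ?n) s)" "Suc ?n"] bn Gn0 Gn1 by simp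
        finally show ?thesis by simp
      qed
    next
      case False
      then have wb: "w \<le> (G^^?n) (\<beta> ((G^^?n) s))" using IH by blast
      have "gt a b w \<le> G w" using Hw by blast
      also have "\<dots> \<le> G ((G^^?n) (\<beta> ((G^^?n) s)))" using Gm wb IH by blast
      also have "\<dots> = (G^^Suc ?n) (\<beta> ((G^^?n) s))" by simp
      also have "\<dots> \<le> (G^^Suc ?n) (\<beta> ((G^^Suc ?n) s))" using fp(2) bGn bGn0 by blast
      finally show ?thesis by simp
    qed
    have len: "length (a # l) = Suc ?n" by simp
    show ?thesis unfolding len e1 e2 using Hw Hv gvn disj by blast
  qed
qed


lemma gate_mono:
  assumes "k \<ge> 1" "\<forall>s\<in>{1..k}. \<forall>v\<ge>0. gam i s v \<le> gt i s v" "\<forall>s\<in>{1..k}. V s x \<ge> 0"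
    "gate k gt V i x"
  shows "gate k gam V i x"
proof -
  have "Max ((\<lambda>s. gam i s (V s x)) ` {1..k}) \<le> Max ((\<lambda>s. gt i s (V s x)) ` {1..k})"
  proof (rule Max.boundedI)
    show "finite ((\<lambda>s. gam i s (V s x)) ` {1..k})" by simp
    show "(\<lambda>s. gam i s (V s x)) ` {1..k} \<noteq> {}" using assms(1) by auto
  next
    fix a assume "a \<in> (\<lambda>s. gam i s (V s x)) ` {1..k}"
    then obtain s where s: "s \<in> {1..k}" "a = gam i s (V s x)" by auto
    then have "a \<le> gt i s (V s x)" using assms(2,3) by auto
    also have "\<dots> \<le> Max ((\<lambda>s. gt i s (V s x)) ` {1..k})" using s by (intro Max_ge) auto
    finally show "a \<le> Max ((\<lambda>s. gt i s (V s x)) ` {1..k})" .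
  qed
  then show ?thesis using assms(4) unfolding gate_def by linarith
qed



lemma VRCLF_mono:
  assumes H: "VRCLF_data D f g cs k V \<eta> W \<delta> K gam \<rho> \<epsilon> A \<kappa> \<nu>"
    and a2: "\<forall>i\<in>{1..k}. \<forall>j\<in>{1..k}. classN1 (gt i j)"
    and a3: "\<forall>i\<in>{1..k}. \<forall>s\<ge>0. gt i i s = 0"
    and a4: "small_gain k gt"
    and G: "\<forall>i\<in>{1..k}. \<forall>x. gate k gt V i x \<longrightarrow> gate k gam V i x"
  shows "VRCLF_data D f g cs k V \<eta> W \<delta> K gt \<rho> \<epsilon> A \<kappa> \<nu>"
proof -
  have Gx: "gate k gam V i x" if "i \<in> {1..k}" "gate k gt V i x" for i x using G that by blast
  have ii: "\<forall>x. \<eta> x \<le> \<epsilon> \<longrightarrow> (\<forall>i\<in>{1..k}. \<forall>j\<in>{1..k}.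
         (gate k gam V i x \<and> Lg g (V i) x = 0 \<longrightarrow> maxLf D f (V i) x + \<rho> (V i x) \<le> 0) \<and>
         (gate k gam V i x \<and> gate k gam V j x \<and> Lg g (V i) x * Lg g (V j) x < 0 \<longrightarrow>
            maxLf D f (V i) x + \<rho> (V i x) \<le>
              Lg g (V i) x / Lg g (V j) x * (maxLf D f (V j) x + \<rho> (V j x))))"
    using H unfolding VRCLF_data_def by (elim conjE) assumption
  have iv: "\<forall>x. 0 \<le> \<eta> x \<and> \<eta> x \<le> \<epsilon> \<longrightarrow> (\<forall>j\<in>{1..k}.
         (gate k gam V j x \<and> Lg g \<eta> x * Lg g (V j) x < 0 \<longrightarrow>
            maxLf D f \<eta> x + \<delta> (\<eta> x) \<le> Lg g \<eta> x / Lg g (V j) x * (maxLf D f (V j) x + \<rho> (V j x))) \<and>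
         (gate k gam V j x \<and> Lg g W x * Lg g (V j) x < 0 \<longrightarrow>
            maxLf D f W x - K (\<eta> x) * W x \<le> Lg g W x / Lg g (V j) x * (maxLf D f (V j) x + \<rho> (V j x))))"
    using H unfolding VRCLF_data_def by (elim conjE) assumption
  have vi: "\<forall>i\<in>{1..k}. \<forall>x\<in>A. gate k gam V i x \<longrightarrow>
         maxLf D f (V i) x + Lg g (V i) x * \<kappa> x \<le> - \<rho> (V i x)"
    using H unfolding VRCLF_data_def by (elim conjE) assumption
  have vii: "\<forall>a. (cs = P2 a \<or> (\<exists>b. cs = P3 a b)) \<longrightarrow>
         (\<forall>x. \<forall>i\<in>{1..k}. gate k gam V i x \<and> \<eta> x \<le> \<epsilon> \<and> Lg g (V i) x > 0 \<longrightarrow>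
            maxLf D f (V i) x + \<rho> (V i x) - a * Lg g (V i) x < 0) \<and>
         (\<forall>x. \<eta> x \<ge> 0 \<and> Lg g \<eta> x > 0 \<longrightarrow> maxLf D f \<eta> x + \<delta> (\<eta> x) - a * Lg g \<eta> x < 0) \<and>
         (\<forall>x. \<eta> x \<ge> 0 \<and> Lg g W x > 0 \<longrightarrow> maxLf D f W x - K (\<eta> x) * W x - a * Lg g W x < 0)"
    using H unfolding VRCLF_data_def by (elim conjE) assumption
  have viii: "\<forall>b. (\<exists>a. cs = P3 a b) \<longrightarrow>
         (\<forall>x. \<forall>i\<in>{1..k}. gate k gam V i x \<and> \<eta> x \<le> \<epsilon> \<and> Lg g (V i) x < 0 \<longrightarrow>
            maxLf D f (V i) x + \<rho> (V i x) + b * Lg g (V i) x < 0) \<and>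
         (\<forall>x. \<eta> x \<ge> 0 \<and> Lg g \<eta> x < 0 \<longrightarrow> maxLf D f \<eta> x + \<delta> (\<eta> x) + b * Lg g \<eta> x < 0) \<and>
         (\<forall>x. \<eta> x \<ge> 0 \<and> Lg g W x < 0 \<longrightarrow> maxLf D f W x - K (\<eta> x) * W x + b * Lg g W x < 0)"
    using H unfolding VRCLF_data_def by (elim conjE) assumption
  have ii': "\<forall>x. \<eta> x \<le> \<epsilon> \<longrightarrow> (\<forall>i\<in>{1..k}. \<forall>j\<in>{1..k}.
         (gate k gt V i x \<and> Lg g (V i) x = 0 \<longrightarrow> maxLf D f (V i) x + \<rho> (V i x) \<le> 0) \<and>
         (gate k gt V i x \<and> gate k gt V j x \<and> Lg g (V i) x * Lg g (V j) x < 0 \<longrightarrow>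
            maxLf D f (V i) x + \<rho> (V i x) \<le>
              Lg g (V i) x / Lg g (V j) x * (maxLf D f (V j) x + \<rho> (V j x))))"
  proof (intro allI impI ballI)
    fix x i j assume x: "\<eta> x \<le> \<epsilon>" and ij: "i \<in> {1..k}" "j \<in> {1..k}"
    note q = ii[rule_format, OF x ij]
    show "(gate k gt V i x \<and> Lg g (V i) x = 0 \<longrightarrow> maxLf D f (V i) x + \<rho> (V i x) \<le> 0) \<and>
         (gate k gt V i x \<and> gate k gt V j x \<and> Lg g (V i) x * Lg g (V j) x < 0 \<longrightarrow>
            maxLf D f (V i) x + \<rho> (V i x) \<le>
              Lg g (V i) x / Lg g (V j) x * (maxLf D f (V j) x + \<rho> (V j x)))"
      using q Gx[OF ij(1)] Gx[OF ij(2)] by blast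
  qed
  have iv': "\<forall>x. 0 \<le> \<eta> x \<and> \<eta> x \<le> \<epsilon> \<longrightarrow> (\<forall>j\<in>{1..k}.
         (gate k gt V j x \<and> Lg g \<eta> x * Lg g (V j) x < 0 \<longrightarrow>
            maxLf D f \<eta> x + \<delta> (\<eta> x) \<le> Lg g \<eta> x / Lg g (V j) x * (maxLf D f (V j) x + \<rho> (V j x))) \<and>
         (gate k gt V j x \<and> Lg g W x * Lg g (V j) x < 0 \<longrightarrow>
            maxLf D f W x - K (\<eta> x) * W x \<le> Lg g W x / Lg g (V j) x * (maxLf D f (V j) x + \<rho> (V j x))))"
  proof (intro allI impI ballI)
    fix x j assume x: "0 \<le> \<eta> x \<and> \<eta> x \<le> \<epsilon>" and j: "j \<in> {1..k}"
    note q = iv[rule_format, OF x j]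
    show "(gate k gt V j x \<and> Lg g \<eta> x * Lg g (V j) x < 0 \<longrightarrow>
            maxLf D f \<eta> x + \<delta> (\<eta> x) \<le> Lg g \<eta> x / Lg g (V j) x * (maxLf D f (V j) x + \<rho> (V j x))) \<and>
         (gate k gt V j x \<and> Lg g W x * Lg g (V j) x < 0 \<longrightarrow>
            maxLf D f W x - K (\<eta> x) * W x \<le> Lg g W x / Lg g (V j) x * (maxLf D f (V j) x + \<rho> (V j x)))"
      using q Gx[OF j] by blast
  qed
  have vi': "\<forall>i\<in>{1..k}. \<forall>x\<in>A. gate k gt V i x \<longrightarrow>
         maxLf D f (V i) x + Lg g (V i) x * \<kappa> x \<le> - \<rho> (V i x)"
    using vi Gx by blast
  have vii': "\<forall>a. (cs = P2 a \<or> (\<exists>b. cs = P3 a b)) \<longrightarrow>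
         (\<forall>x. \<forall>i\<in>{1..k}. gate k gt V i x \<and> \<eta> x \<le> \<epsilon> \<and> Lg g (V i) x > 0 \<longrightarrow>
            maxLf D f (V i) x + \<rho> (V i x) - a * Lg g (V i) x < 0) \<and>
         (\<forall>x. \<eta> x \<ge> 0 \<and> Lg g \<eta> x > 0 \<longrightarrow> maxLf D f \<eta> x + \<delta> (\<eta> x) - a * Lg g \<eta> x < 0) \<and>
         (\<forall>x. \<eta> x \<ge> 0 \<and> Lg g W x > 0 \<longrightarrow> maxLf D f W x - K (\<eta> x) * W x - a * Lg g W x < 0)"
    using vii Gx by blast
  have viii': "\<forall>b. (\<exists>a. cs = P3 a b) \<longrightarrow>
         (\<forall>x. \<forall>i\<in>{1..k}. gate k gt V i x \<and> \<eta> x \<le> \<epsilon> \<and> Lg g (V i) x < 0 \<longrightarrow>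
            maxLf D f (V i) x + \<rho> (V i x) + b * Lg g (V i) x < 0) \<and>
         (\<forall>x. \<eta> x \<ge> 0 \<and> Lg g \<eta> x < 0 \<longrightarrow> maxLf D f \<eta> x + \<delta> (\<eta> x) + b * Lg g \<eta> x < 0) \<and>
         (\<forall>x. \<eta> x \<ge> 0 \<and> Lg g W x < 0 \<longrightarrow> maxLf D f W x - K (\<eta> x) * W x + b * Lg g W x < 0)"
    using viii Gx by blast
  show ?thesis
    using H ii' iv' vi' vii' viii' a2 a3 a4 unfolding VRCLF_data_def
    by (elim conjE) (intro conjI; assumption)
qed



theorem lemma3p6:
  fixes D :: "(real^'l) set" and f :: "real^'l \<Rightarrow> real^'n \<Rightarrow> real^'n" and g :: "real^'n \<Rightarrow> real^'n"
    and cs :: ctrl and k :: nat and V :: "nat \<Rightarrow> real^'n \<Rightarrow> real"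
    and \<eta> W :: "real^'n \<Rightarrow> real" and \<delta> K \<rho> :: "real \<Rightarrow> real"
    and gam :: "nat \<Rightarrow> nat \<Rightarrow> real \<Rightarrow> real" and \<epsilon> :: real
    and A :: "(real^'n) set" and \<kappa> :: "real^'n \<Rightarrow> real" and \<nu> :: enat
  assumes "system_ok D f g cs"
    and "k \<ge> 1"
    and "VRCLF_data D f g cs k V \<eta> W \<delta> K gam \<rho> \<epsilon> A \<kappa> \<nu>"
  shows "\<exists>gt :: nat \<Rightarrow> nat \<Rightarrow> real \<Rightarrow> real.
           (\<forall>i\<in>{1..k}. \<forall>j\<in>{1..k}. classN1 (gt i j))
         \<and> (\<forall>i\<in>{1..k}. \<forall>s\<ge>0. gt i i s = 0)
         \<and> (\<forall>i\<in>{1..k}. \<forall>j\<in>{1..k}. i \<noteq> j \<longrightarrow> posdef (gt i j) \<and> filterlim (gt i j) at_top at_top)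
         \<and> VRCLF_data D f g cs k V \<eta> W \<delta> K gt \<rho> \<epsilon> A \<kappa> \<nu>"
proof -
  note H = assms(3)[unfolded VRCLF_data_def]
  have gN1: "\<forall>i\<in>{1..k}. \<forall>j\<in>{1..k}. classN1 (gam i j)" using H by (elim conjE) assumption
  have diag: "\<forall>i\<in>{1..k}. \<forall>s\<ge>0. gam i i s = 0" using H by (elim conjE) assumption
  have sg: "small_gain k gam" using H by (elim conjE) assumption
  have V1: "\<forall>i\<in>{1..k}. Ck 1 UNIV (V i) \<and> (\<forall>x. 0 \<le> V i x)" using H by (elim conjE) assumption
  have Vnn: "\<forall>i\<in>{1..k}. \<forall>x. V i x \<ge> 0" using V1 by blast
  have gprop: "continuous_on {0..} (gam i j) \<and> (\<forall>x y. 0 \<le> x \<longrightarrow> x \<le> y \<longrightarrow> gam i j x \<le> gam i j y)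
      \<and> gam i j 0 = 0 \<and> (\<forall>s\<ge>0. gam i j s \<ge> 0)" if "i \<in> {1..k}" "j \<in> {1..k}" for i j
    using gN1 that by (auto simp: classN1_def mono_on_def)
  define G where "G s = s + (\<Sum>i\<in>{1..k}. \<Sum>j\<in>{1..k}. gam i j s)" for s
  have Gsum_nn: "(\<Sum>i\<in>{1..k}. \<Sum>j\<in>{1..k}. gam i j s) \<ge> 0" if "s \<ge> 0" for s
    using gprop that by (intro sum_nonneg) auto
  have Gge: "\<forall>s\<ge>0. G s \<ge> s" using Gsum_nn by (auto simp: G_def)
  have GN1: "classN1 G"
  proof -
    have "continuous_on {0..} G" unfolding G_def
      by (intro continuous_intros) (use gprop in auto)
    moreover have "mono_on {0..} G" unfolding mono_on_def G_def
    proof (intro allI impI)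
      fix x y :: real assume "x \<in> {0..} \<and> y \<in> {0..} \<and> x \<le> y"
      then have "(\<Sum>i\<in>{1..k}. \<Sum>j\<in>{1..k}. gam i j x) \<le> (\<Sum>i\<in>{1..k}. \<Sum>j\<in>{1..k}. gam i j y)"
        using gprop by (intro sum_mono) auto
      then show "x + (\<Sum>i\<in>{1..k}. \<Sum>j\<in>{1..k}. gam i j x) \<le> y + (\<Sum>i\<in>{1..k}. \<Sum>j\<in>{1..k}. gam i j y)"
        using \<open>x \<in> {0..} \<and> y \<in> {0..} \<and> x \<le> y\<close> by linarith
    qed
    moreover have "G 0 = 0" using gprop by (simp add: G_def)
    ultimately show ?thesis using Gge unfolding classN1_def by force
  qed
  have Ggam: "gam i j s \<le> G s" if "i \<in> {1..k}" "j \<in> {1..k}" "s \<ge> 0" for i j s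
  proof -
    have "gam i j s \<le> (\<Sum>j\<in>{1..k}. gam i j s)"
      using gprop that by (intro member_le_sum) auto
    also have "\<dots> \<le> (\<Sum>i\<in>{1..k}. \<Sum>j\<in>{1..k}. gam i j s)"
      using gprop that by (intro member_le_sum[where f="\<lambda>i. \<Sum>j\<in>{1..k}. gam i j s"] sum_nonneg) auto
    finally show ?thesis using that by (simp add: G_def)
  qed
  define Q where "Q = G ^^ k"
  define R where "R = G ^^ (k + k)"
  have RN1: "classN1 R" unfolding R_def by (rule N1_funpow[OF GN1])
  have QN1: "classN1 Q" unfolding Q_def by (rule N1_funpow[OF GN1])
  have Rq: "R u = Q (Q u)" for u by (simp add: R_def Q_def funpow_add)
  define \<beta> where "\<beta> = bfun R"
  note bp = bfun_props[OF RN1, folded \<beta>_def]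
  have bm: "mono_on {0..} \<beta>" using bp(4) by (simp add: classN1_def)
  have Qm: "0 \<le> x \<Longrightarrow> x \<le> y \<Longrightarrow> Q x \<le> Q y" for x y using QN1 by (auto simp: classN1_def mono_on_def)
  have Q0: "Q 0 = 0" and Qnn: "\<And>s. s \<ge> 0 \<Longrightarrow> Q s \<ge> 0" using QN1 by (auto simp: classN1_def)
  have key: "Q (\<beta> (Q t)) < t" if t: "t > 0" for t
  proof (rule ccontr)
    assume "\<not> Q (\<beta> (Q t)) < t"
    then have ge: "Q (\<beta> (Q t)) \<ge> t" by simp
    define u where "u = \<beta> (Q t)"
    have u0: "u \<ge> 0" using bp(3) by (simp add: u_def)
    have "Q (Q u) \<ge> Q t" using Qm[OF _ ge[folded u_def]] t by simp
    moreover have "0 \<le> Q t" "0 \<le> Q (Q u)" using Qnn t u0 by auto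
    ultimately have "\<beta> (Q (Q u)) \<ge> \<beta> (Q t)" using bm unfolding mono_on_def by blast
    then have "\<beta> (R u) \<ge> u" by (simp add: Rq u_def)
    moreover have "\<beta> (R u) \<le> u/2" using bp(1) u0 by blast
    ultimately have "u = 0" using u0 by linarith
    then show False using ge Q0 t by (simp add: u_def)
  qed
  define gt where "gt i j s = (if i = j then 0 else max (gam i j s) (\<beta> s))" for i j s
  have gtN1: "\<forall>i\<in>{1..k}. \<forall>j\<in>{1..k}. classN1 (gt i j)"
  proof (intro ballI)
    fix i j assume ij: "i \<in> {1..k}" "j \<in> {1..k}"
    show "classN1 (gt i j)"
    proof (cases "i = j")
      case True
      then have "gt i j = (\<lambda>s. 0)" by (auto simp: gt_def)
      then show ?thesis by (simp add: classN1_def mono_on_def)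
    next
      case False
      then have e: "gt i j = (\<lambda>s. max (gam i j s) (\<beta> s))" by (auto simp: gt_def)
      have "continuous_on {0..} (\<lambda>s. max (gam i j s) (\<beta> s))"
        using gprop[OF ij] bp(4) by (intro continuous_on_max) (auto simp: classN1_def)
      moreover have "mono_on {0..} (\<lambda>s. max (gam i j s) (\<beta> s))"
        using gprop[OF ij] bm unfolding mono_on_def
        by (smt (verit, best) atLeast_iff order_trans)
      ultimately show ?thesis unfolding e classN1_def using gprop[OF ij] bp by auto
    qed
  qed
  have gtdiag: "\<forall>i\<in>{1..k}. \<forall>s\<ge>0. gt i i s = 0" by (simp add: gt_def)
  have gtpos: "\<forall>i\<in>{1..k}. \<forall>j\<in>{1..k}. i \<noteq> j \<longrightarrow> posdef (gt i j) \<and> filterlim (gt i j) at_top at_top"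
  proof (intro ballI impI conjI)
    fix i j assume ij: "i \<in> {1..k}" "j \<in> {1..k}" and ne: "i \<noteq> j"
    show "posdef (gt i j)" unfolding posdef_def gt_def using ne gprop[OF ij] bp(3,5) bp(4)[unfolded classN1_def]
      by (auto simp: max_def)
    show "filterlim (gt i j) at_top at_top"
      by (rule filterlim_at_top_mono[OF bp(6)]) (auto simp: gt_def ne)
  qed
  have Hc: "(gt a b w = gam a b w \<or> gt a b w = \<beta> w) \<and> 0 \<le> gt a b w
       \<and> gt a b w \<le> G w \<and> 0 \<le> gam a b w \<and> gam a b w \<le> G w"
    if "a \<in> {1..k}" "b \<in> {1..k}" "w \<ge> 0" for a b w
  proof -
    have "\<beta> w \<le> G w" using bp(2) Gge that(3) by force
    then show ?thesis using that diag gprop[OF that(1,2)] Ggam[OF that] Gge bp(3)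
      by (auto simp: gt_def max_def)
  qed
  have Hc': "\<forall>a\<in>{1..k}. \<forall>b\<in>{1..k}. \<forall>w\<ge>0. (gt a b w = gam a b w \<or> gt a b w = \<beta> w) \<and> 0 \<le> gt a b w
       \<and> gt a b w \<le> G w \<and> 0 \<le> gam a b w \<and> gam a b w \<le> G w" using Hc by blast
  note cb = chain_bound[of "{1..k}" gt gam \<beta> G, OF Hc' GN1 Gge bm] 
  note fp = fp_props[OF GN1 Gge]
  have bn': "\<forall>y\<ge>0. \<beta> y \<ge> 0" using bp(3) by blast
  have sgt: "small_gain k gt" unfolding small_gain_def
  proof (intro allI impI)
    fix "is" :: "nat list" and s :: real
    assume a: "2 \<le> length is \<and> length is \<le> k \<and> distinct is \<and> set is \<subseteq> {1..k}" and s: "s > 0"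
    have ne: "is \<noteq> []" using a by auto
    have hd: "hd is \<in> {1..k}" using a ne hd_in_set by blast
    have c': "chain gt (hd is) is s = chain gam (hd is) is s \<or>
      chain gt (hd is) is s \<le> (G^^length is) (\<beta> ((G^^length is) s))"
      using cb[OF bn', where l="is" and iz="hd is" and s=s] ne a hd s by auto
    show "chain gt (hd is) is s < s"
    proof (cases "chain gt (hd is) is s = chain gam (hd is) is s")
      case True
      then show ?thesis using sg a s unfolding small_gain_def by auto
    next
      case False
      let ?r = "length is"
      have s0: "s \<ge> 0" using s by simp
      have "chain gt (hd is) is s \<le> (G^^?r) (\<beta> ((G^^?r) s))" using c' False by auto
      also have "\<dots> \<le> (G^^?r) (\<beta> ((G^^k) s))"
      proof -
        have "(G^^?r) s \<le> (G^^k) s" using fp(3)[OF s0] a by auto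
        moreover have "(G^^?r) s \<ge> 0" using fp(1)[OF s0, of ?r] s0 by linarith
        ultimately have "\<beta> ((G^^?r) s) \<le> \<beta> ((G^^k) s)" using bm by (auto simp: mono_on_def)
        then show ?thesis using fp(2) bp(3) by blast
      qed
      also have "\<dots> \<le> (G^^k) (\<beta> ((G^^k) s))" using fp(3) bp(3) a by blast
      also have "\<dots> < s" using key[OF s] by (simp add: Q_def)
      finally show ?thesis .
    qed
  qed
  have Gt: "\<forall>i\<in>{1..k}. \<forall>x. gate k gt V i x \<longrightarrow> gate k gam V i x"
  proof (intro ballI allI impI)
    fix i x assume i: "i \<in> {1..k}" and g: "gate k gt V i x"
    show "gate k gam V i x"
    proof (rule gate_mono[OF assms(2) _ _ g])
      show "\<forall>s\<in>{1..k}. \<forall>v\<ge>0. gam i s v \<le> gt i s v"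
        using diag i by (auto simp: gt_def)
      show "\<forall>s\<in>{1..k}. V s x \<ge> 0" using Vnn by blast
    qed
  qed
  have "VRCLF_data D f g cs k V \<eta> W \<delta> K gt \<rho> \<epsilon> A \<kappa> \<nu>"
    by (rule VRCLF_mono[OF assms(3) gtN1 gtdiag sgt Gt])
  then show ?thesis using gtN1 gtdiag gtpos by blast
qed


end
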